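(* Let $a\in\mathbb{C}$ with $|a-\tfrac14|<\tfrac14$, and let $\varphi(z)=az^2+(1-2a)z+a$. Then the iterates $\varphi_n$ converge to the constant $1$ uniformly on all of $\mathbb{D}$, i.e. $\lim_{n\to\infty}\sup_{z\in\mathbb{D}}|\varphi_n(z)-1|=0$.
   Context: $\mathbb{D}$ is the open unit disk. $\varphi_n$ denotes the $n$-th iterate $\varphi\circ\cdots\circ\varphi$ ($n$ times). Such $\varphi$ is an analytic self-map of $\mathbb{D}$ with $\varphi(1)=1$, $\varphi'(1)=1$. *)

theory Defs
  imports "HOL-Analysis.Analysis"
begin

end

theory Submission
  imports Defs
begin

lemma reinv: "Re (1/(1-z)) = (1 - Re z) / ((1 - Re z)^2 + (Im z)^2)"
  by (simp add: Re_divide cmod_power2 power2_eq_square)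

lemma in_disk_V: fixes z::complex assumes "cmod z < 1" shows "Re (1/(1-z)) > 1/2"
proof -
  have h: "(Re z)^2 + (Im z)^2 < 1" proof -
    have "(cmod z)^2 < 1" using assms by (simp add: power_less_one_iff)
    then show ?thesis by (simp add: cmod_power2)
  qed
  have p: "(1 - Re z)^2 + (Im z)^2 > 0" using h
  proof -
    have "1 - z \<noteq> 0" using assms by auto
    then have "(cmod (1-z))^2 > 0" by simp
    then show ?thesis by (simp add: cmod_power2)
  qed
  have "(1 - Re z)^2 + (Im z)^2 < 2 * (1 - Re z)" using h by (simp add: power2_eq_square algebra_simps)
  then have "1/2 < (1 - Re z) / ((1 - Re z)^2 + (Im z)^2)" using p by (simp add: less_divide_eq)
  then show ?thesis unfolding reinv .
qed

lemma V_in_disk: fixes z::complex assumes "z \<noteq> 1" "Re (1/(1-z)) > 1/2" shows "cmod z < 1"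
proof -
  have p: "(1 - Re z)^2 + (Im z)^2 > 0" proof -
    have "1 - z \<noteq> 0" using assms(1) by simp
    then have "(cmod (1-z))^2 > 0" by simp
    then show ?thesis by (simp add: cmod_power2)
  qed
  have "1/2 < (1 - Re z) / ((1 - Re z)^2 + (Im z)^2)" using assms(2) unfolding reinv .
  then have "(1 - Re z)^2 + (Im z)^2 < 2 * (1 - Re z)" using p by (simp add: less_divide_eq)
  then have "(Re z)^2 + (Im z)^2 < 1" by (simp add: power2_eq_square algebra_simps)
  then show ?thesis by (simp add: cmod_def)
qed

lemma V_bound: fixes z::complex assumes "z \<noteq> 1" shows "cmod (z - 1) * Re (1/(1-z)) \<le> 1"
proof -
  have "Re (1/(1-z)) \<le> cmod (1/(1-z))" by (rule complex_Re_le_cmod)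
  also have "\<dots> = 1 / cmod (z-1)" by (simp add: norm_divide norm_minus_commute)
  finally show ?thesis using assms by (simp add: field_simps)
qed

lemma step_id: fixes a z :: complex assumes "z \<noteq> 1" "1 - a + a*z \<noteq> 0" "a \<noteq> 0"
  shows "1/(1 - (a * z^2 + (1 - 2*a) * z + a)) = 1/(1-z) + 1/(1/a - 1 + z)"
proof -
  have e: "1 - (a * z^2 + (1 - 2*a) * z + a) = (1-z)*(1 - a + a*z)" by (simp add: algebra_simps power2_eq_square)
  have "1/a - 1 + z = (1 - a + a*z)/a" using assms by (simp add: field_simps)
  then show ?thesis using assms unfolding e by (simp add: field_simps)
qed

lemma re_inv_a: fixes a::complex assumes "cmod (a - 1/4) < 1/4" shows "a \<noteq> 0" "Re (1/a) > 2"
proof -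
  have "(cmod (a - 1/4))^2 < (1/4)^2" using assms by (simp add: power_strict_mono)
  then have h: "(Re a - 1/4)^2 + (Im a)^2 < 1/16" using cmod_power2[of "a - 1/4"] by (simp add: power2_eq_square)
  then have h2: "(Re a)^2 + (Im a)^2 < Re a / 2" by (simp add: power2_eq_square algebra_simps)
  moreover have "(Re a)^2 + (Im a)^2 \<ge> 0" by simp
  ultimately have "Re a > 0" by linarith
  then show "a \<noteq> 0" by auto
  have p: "(Re a)^2 + (Im a)^2 > 0" using \<open>Re a > 0\<close> by (simp add: add_pos_nonneg)
  have "Re (1/a) = Re a / ((Re a)^2 + (Im a)^2)" by (simp add: Re_divide cmod_power2)
  moreover have "2 < Re a / ((Re a)^2 + (Im a)^2)" using h2 p by (simp add: less_divide_eq)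
  ultimately show "Re (1/a) > 2" by simp
qed

lemma re_lower: fixes c z :: complex assumes "Re c > 1" "cmod z < 1"
  shows "c + z \<noteq> 0" "Re (1/(c+z)) \<ge> (Re c - 1)/(cmod c + 1)^2"
proof -
  have rz: "Re z \<ge> - cmod z" using abs_Re_le_cmod[of z] by linarith
  have r: "Re (c+z) \<ge> Re c - 1" using rz assms by simp
  show "c + z \<noteq> 0"
  proof
    assume "c + z = 0" then have "Re (c+z) = 0" by simp
    with r assms show False by simp
  qed
  then have np: "cmod (c+z) > 0" by simp
  have nb: "cmod (c+z) \<le> cmod c + 1" using norm_triangle_ineq[of c z] assms by linarith
  have gen: "\<And>w::complex. Re (1/w) = Re w / (cmod w)^2" by (simp add: Re_divide cmod_power2)
  have "Re (1/(c+z)) = Re (c+z) / (cmod (c+z))^2" by (rule gen)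
  moreover have "(Re c - 1)/(cmod c + 1)^2 \<le> Re (c+z) / (cmod (c+z))^2"
    apply (rule frac_le) using r assms np nb by (auto intro: power_mono)
  ultimately show "Re (1/(c+z)) \<ge> (Re c - 1)/(cmod c + 1)^2" by simp
qed

theorem mainTheorem3:
  fixes a :: complex
  assumes "cmod (a - 1/4) < 1/4"
  shows "uniform_limit (ball 0 1)
           (\<lambda>n. ((\<lambda>z. a * z^2 + (1 - 2*a) * z + a) ^^ n))
           (\<lambda>_. 1) sequentially"
proof -
  define f where "f = (\<lambda>z::complex. a * z^2 + (1 - 2*a) * z + a)"
  define c where "c = 1/a - 1"
  define d where "d = (Re c - 1)/(cmod c + 1)^2"
  have a0: "a \<noteq> 0" and ra: "Re (1/a) > 2" using re_inv_a[OF assms] by auto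
  have rc: "Re c > 1" using ra by (simp add: c_def)
  have dpos: "d > 0"
  proof -
    have "cmod c + 1 > 0" using norm_ge_zero[of c] by linarith
    then have "(cmod c + 1)^2 > 0" by simp
    then show ?thesis using rc unfolding d_def by simp
  qed
  have step: "cmod (f y) < 1 \<and> Re (1/(1 - f y)) \<ge> Re (1/(1-y)) + d" if y: "cmod y < 1" for y
  proof -
    have y1: "y \<noteq> 1" using y by auto
    have cz: "c + y \<noteq> 0" and lb: "Re (1/(c+y)) \<ge> d" using re_lower[OF rc y] by (auto simp: d_def)
    have nz: "1 - a + a*y \<noteq> 0"
    proof
      assume "1 - a + a*y = 0"
      then have "c + y = (1 - a + a*y)/a" using a0 by (simp add: c_def field_simps)
      with \<open>1 - a + a*y = 0\<close> cz show False by simp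
    qed
    have id: "1/(1 - f y) = 1/(1-y) + 1/(c + y)"
      unfolding f_def c_def using step_id[OF y1 nz a0] by (simp add: add.assoc)
    have V: "Re (1/(1 - f y)) \<ge> Re (1/(1-y)) + d" using lb by (simp add: id)
    have fy1: "f y \<noteq> 1"
    proof
      assume "f y = 1"
      then have "f y - 1 = 0" by simp
      have "1 - f y = (1-y)*(1 - a + a*y)" unfolding f_def by (simp add: algebra_simps power2_eq_square)
      with \<open>f y = 1\<close> y1 nz show False by simp
    qed
    have "Re (1/(1-y)) > 1/2" by (rule in_disk_V[OF y])
    then have "Re (1/(1 - f y)) > 1/2" using V dpos by linarith
    then have "cmod (f y) < 1" by (rule V_in_disk[OF fy1])
    with V show ?thesis by simp
  qed
  have inv: "cmod ((f^^n) z) < 1 \<and> Re (1/(1 - (f^^n) z)) \<ge> 1/2 + real n * d" if z: "cmod z < 1" for n z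
  proof (induction n)
    case 0
    then show ?case using in_disk_V[OF z] z by simp
  next
    case (Suc n)
    then show ?case using step[of "(f^^n) z"] by (simp add: algebra_simps)
  qed
  have bound: "cmod ((f^^n) z - 1) \<le> 1/(1/2 + real n * d)" if z: "cmod z < 1" for n z
  proof -
    let ?w = "(f^^n) z"
    have w: "cmod ?w < 1" and V: "Re (1/(1 - ?w)) \<ge> 1/2 + real n * d" using inv[OF z] by auto
    have w1: "?w \<noteq> 1" using w by auto
    have p: "1/2 + real n * d > 0" using dpos by (simp add: add_pos_nonneg)
    have "cmod (?w - 1) * (1/2 + real n * d) \<le> cmod (?w - 1) * Re (1/(1 - ?w))"
      using V by (simp add: mult_left_mono)
    also have "\<dots> \<le> 1" by (rule V_bound[OF w1])
    finally show ?thesis using p by (simp add: field_simps)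
  qed
  show ?thesis
    unfolding f_def[symmetric] uniform_limit_iff
  proof (intro allI impI)
    fix e :: real assume e: "e > 0"
    obtain N :: nat where N: "real N > 1/(e*d)" using reals_Archimedean2 by blast
    show "\<forall>\<^sub>F n in sequentially. \<forall>x\<in>ball 0 1. dist ((f ^^ n) x) 1 < e"
    proof (rule eventually_sequentiallyI[of N])
      fix n assume n: "N \<le> n"
      have ed: "e * d > 0" using e dpos by simp
      have "real n * (e*d) \<ge> real N * (e*d)" using n ed by (simp add: mult_right_mono)
      moreover have "real N * (e*d) > 1" using N ed by (simp add: divide_less_eq)
      moreover have "e * (1/2 + real n * d) = e/2 + real n * (e*d)" by (simp add: algebra_simps)
      ultimately have "e * (1/2 + real n * d) > 1" using e by linarith
      then have lt: "1/(1/2 + real n * d) < e" using dpos by (simp add: divide_less_eq add_pos_nonneg mult.commute)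
      show "\<forall>x\<in>ball 0 1. dist ((f ^^ n) x) 1 < e"
      proof
        fix x :: complex assume "x \<in> ball 0 1"
        then have "cmod x < 1" by simp
        from bound[OF this, of n] lt show "dist ((f ^^ n) x) 1 < e" by (simp add: dist_norm)
      qed
    qed
  qed
qed

end
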